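(* Let $X_1, X_2, \ldots$ be independent random variables, each uniformly distributed on $[-1,1]$, and fix $\varepsilon > 0$. For $t \ge 0$ and $z \in \mathbb{R}$, let $f_t(z) = 1$ if there exists $S \subseteq \{1,\dots,t\}$ with $\lvert z - \sum_{i \in S} X_i \rvert < \varepsilon$, and $f_t(z) = 0$ otherwise; let $v_t = \frac{1}{2}\int_{-1}^{1} f_t(z)\,\mathrm{d}z$, and let $\tau_1 = \min\{t \ge 0 : v_t > 1/2\}$. Let $t$ be an integer, and given $\beta \in (0,1/8)$, let $p_\beta = 1 - \frac{7}{8(1-\beta)}$ and $i^* = \left\lceil \frac{\log\frac{1}{2\varepsilon}}{\log(1+\beta)} \right\rceil$. If $t \ge i^*/p_\beta$, then $$\Pr[\tau_1 \le t] \ge 1 - \exp\left[-\frac{2p_\beta^2}{t}\left(t - \frac{i^*}{p_\beta}\right)^2\right].$$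
   Context: $f_t$ is the indicator that $z$ can be approximated to within error strictly less than $\varepsilon$ by a subset sum of the first $t$ variables (the empty sum being $0$); $v_t$ is the fraction of $[-1,1]$ so approximated; $\tau_1$ is the first time this fraction exceeds $1/2$. $\log$ denotes the natural logarithm. *)

theory Defs
  imports "HOL-Probability.Probability"
begin

text \<open>Variables are indexed from 0: X 0, X 1, ... play the role of X_1, X_2, ...;
  the first t variables are X i for i < t.\<close>

definition approx_f :: "real \<Rightarrow> (nat \<Rightarrow> real) \<Rightarrow> nat \<Rightarrow> real \<Rightarrow> real" where
  "approx_f \<epsilon> x t z =
     (if \<exists>S \<subseteq> {..<t}. \<bar>z - (\<Sum>i\<in>S. x i)\<bar> < \<epsilon> then 1 else 0)"

definition approx_v :: "real \<Rightarrow> (nat \<Rightarrow> real) \<Rightarrow> nat \<Rightarrow> real" where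
  "approx_v \<epsilon> x t = (1/2) * integral {-1..1} (approx_f \<epsilon> x t)"

definition tau1 :: "real \<Rightarrow> (nat \<Rightarrow> real) \<Rightarrow> ereal" where
  "tau1 \<epsilon> x =
     (if \<exists>t. approx_v \<epsilon> x t > 1/2
      then ereal (real (LEAST t. approx_v \<epsilon> x t > 1/2)) else \<infinity>)"

end

theory Submission
  imports Defs
begin


definition Aset :: "real \<Rightarrow> (nat \<Rightarrow> real) \<Rightarrow> nat \<Rightarrow> real set" where
  "Aset e x t = {y. \<exists>S\<subseteq>{..<t}. \<bar>y - (\<Sum>i\<in>S. x i)\<bar> < e}"

lemma approx_f_eq: "approx_f e x t = indicator (Aset e x t)"
  by (auto simp: approx_f_def Aset_def fun_eq_iff indicator_def)

lemma Aset_open: "open (Aset e x t)"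
proof -
  have "Aset e x t = (\<Union>S\<in>Pow {..<t}. {y. \<bar>y - (\<Sum>i\<in>S. x i)\<bar> < e})"
    by (auto simp: Aset_def)
  moreover have "open {y. \<bar>y - (\<Sum>i\<in>S. x i)\<bar> < e}" for S
    by (intro open_Collect_less continuous_intros)
  ultimately show ?thesis by auto
qed

lemma Aset_borel[measurable]: "Aset e x t \<in> sets borel"
  using Aset_open by auto

lemma Aset_dep:
  assumes "\<And>i. i < t \<Longrightarrow> x i = x' i"
  shows "Aset e x t = Aset e x' t"
proof -
  have *: "(\<Sum>i\<in>S. x i) = (\<Sum>i\<in>S. x' i)" if "S \<subseteq> {..<t}" for S
    using that assms by (intro sum.cong) auto
  show ?thesis unfolding Aset_def
  proof (intro Collect_cong iffI)
    fix y assume "\<exists>S\<subseteq>{..<t}. \<bar>y - (\<Sum>i\<in>S. x i)\<bar> < e"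
    then obtain S where "S \<subseteq> {..<t}" "\<bar>y - (\<Sum>i\<in>S. x i)\<bar> < e" by blast
    then show "\<exists>S\<subseteq>{..<t}. \<bar>y - (\<Sum>i\<in>S. x' i)\<bar> < e" using *[of S] by auto
  next
    fix y assume "\<exists>S\<subseteq>{..<t}. \<bar>y - (\<Sum>i\<in>S. x' i)\<bar> < e"
    then obtain S where "S \<subseteq> {..<t}" "\<bar>y - (\<Sum>i\<in>S. x' i)\<bar> < e" by blast
    then show "\<exists>S\<subseteq>{..<t}. \<bar>y - (\<Sum>i\<in>S. x i)\<bar> < e" using *[of S] by auto
  qed
qed

lemma Aset_0: "Aset e x 0 = {-e<..<e}"
  by (auto simp: Aset_def abs_less_iff)

lemma Aset_Suc: "Aset e x (Suc t) = Aset e x t \<union> {y. y - x t \<in> Aset e x t}"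
proof (intro set_eqI iffI)
  fix y assume "y \<in> Aset e x (Suc t)"
  then obtain S where S: "S \<subseteq> {..<Suc t}" "\<bar>y - (\<Sum>i\<in>S. x i)\<bar> < e" by (auto simp: Aset_def)
  show "y \<in> Aset e x t \<union> {y. y - x t \<in> Aset e x t}"
  proof (cases "t \<in> S")
    case True
    have S': "S - {t} \<subseteq> {..<t}" using S by auto
    have "(\<Sum>i\<in>S. x i) = x t + (\<Sum>i\<in>S - {t}. x i)"
      using True by (metis finite_lessThan finite_subset S(1) sum.remove)
    then have "\<bar>(y - x t) - (\<Sum>i\<in>S - {t}. x i)\<bar> < e" using S by simp
    then show ?thesis using S' by (auto simp: Aset_def)
  next
    case False
    then have "S \<subseteq> {..<t}" using S by (auto simp: less_Suc_eq)
    then show ?thesis using S by (auto simp: Aset_def)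
  qed
next
  fix y assume "y \<in> Aset e x t \<union> {y. y - x t \<in> Aset e x t}"
  then show "y \<in> Aset e x (Suc t)"
  proof
    assume "y \<in> Aset e x t"
    then show ?thesis by (auto simp: Aset_def) (meson less_Suc_eq lessThan_iff subset_eq)
  next
    assume "y \<in> {y. y - x t \<in> Aset e x t}"
    then obtain S where S: "S \<subseteq> {..<t}" "\<bar>y - x t - (\<Sum>i\<in>S. x i)\<bar> < e" by (auto simp: Aset_def)
    have "t \<notin> S" using S by auto
    then have "(\<Sum>i\<in>insert t S. x i) = x t + (\<Sum>i\<in>S. x i)"
      using S by (meson finite_lessThan finite_subset sum.insert)
    moreover have "insert t S \<subseteq> {..<Suc t}" using S by auto
    ultimately show ?thesis using S unfolding Aset_def
      by (intro CollectI exI[of _ "insert t S"]) (auto simp: algebra_simps)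
  qed
qed

lemma approx_v_eq: "approx_v e x t = measure lborel (Aset e x t \<inter> {-1..1}) / 2"
proof -
  have "integral {-1..1} (approx_f e x t) = integral UNIV (indicator (Aset e x t \<inter> {-1..1}) :: real \<Rightarrow> real)"
  proof -
    have "integral {-1..1} (approx_f e x t) = integral UNIV (\<lambda>y. if y \<in> {-1..1} then approx_f e x t y else 0)"
      by (rule integral_restrict_UNIV[symmetric])
    also have "(\<lambda>y. if y \<in> {-1..1} then approx_f e x t y else 0) = (indicator (Aset e x t \<inter> {-1..1}) :: real \<Rightarrow> real)"
      unfolding approx_f_eq by (auto simp: indicator_def fun_eq_iff)
    finally show ?thesis .
  qed
  also have "\<dots> = measure lebesgue (Aset e x t \<inter> {-1..1})"
    by (rule lmeasure_integral_UNIV[symmetric]) (intro bounded_set_imp_lmeasurable, auto intro: bounded_Int)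
  also have "\<dots> = measure lborel (Aset e x t \<inter> {-1..1})"
    by (intro measure_completion) simp
  finally show ?thesis unfolding approx_v_def by simp
qed

lemma emeasure_B_fin: "emeasure lborel (Aset e x t \<inter> {-1..1}) \<le> 2"
proof -
  have "emeasure lborel (Aset e x t \<inter> {-1..1}) \<le> emeasure lborel {-1..1::real}"
    by (intro emeasure_mono) auto
  then show ?thesis by simp
qed

lemma emeasure_B_eq: "emeasure lborel (Aset e x t \<inter> {-1..1}) = ennreal (2 * approx_v e x t)"
proof -
  have fin: "emeasure lborel (Aset e x t \<inter> {-1..1}) \<noteq> \<top>"
    using emeasure_B_fin[of e x t] by (metis ennreal_numeral ennreal_less_top le_less_trans less_top)
  show ?thesis unfolding approx_v_eq using emeasure_eq_ennreal_measure[OF fin] by simp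
qed

lemma approx_v_dep:
  assumes "\<And>i. i < t \<Longrightarrow> x i = x' i"
  shows "approx_v e x t = approx_v e x' t"
  unfolding approx_v_eq using Aset_dep[OF assms] by simp

lemma approx_v_mono: "approx_v e x t \<le> approx_v e x (Suc t)"
proof -
  have fin: "emeasure lborel (Aset e x (Suc t) \<inter> {-1..1}) < \<top>"
    using emeasure_B_fin[of e x "Suc t"] by (metis ennreal_numeral ennreal_less_top le_less_trans)
  show ?thesis unfolding approx_v_eq
    using fin by (intro divide_right_mono measure_mono_fmeasurable fmeasurableI) (auto simp: Aset_Suc)
qed

lemma approx_v_0: assumes "0 < e" "e \<le> 1" shows "approx_v e x 0 = e"
proof -
  have "Aset e x 0 \<inter> {-1..1} = {-e<..<e}" using assms by (auto simp: Aset_0)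
  then show ?thesis unfolding approx_v_eq using assms by simp
qed

lemma meas_G:
  fixes g :: "'b \<Rightarrow> nat \<Rightarrow> real"
  assumes "\<And>i. i < s \<Longrightarrow> (\<lambda>w. g w i) \<in> borel_measurable N"
  shows "(\<lambda>w. emeasure lborel (Aset e (g w) s \<inter> {-1..1})) \<in> borel_measurable N"
proof -
  define Q where "Q = {p \<in> space (N \<Otimes>\<^sub>M lborel). \<exists>S\<in>Pow {..<s}. \<bar>snd p - (\<Sum>i\<in>S. g (fst p) i)\<bar> < e \<and> snd p \<in> {-1..1}}"
  have Q: "Q \<in> sets (N \<Otimes>\<^sub>M lborel)"
    unfolding Q_def
  proof (intro pred_intros_finite[unfolded pred_def] finite_Pow_iff[THEN iffD2] finite_lessThan)
    fix S assume S: "S \<in> Pow {..<s}"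
    have m0: "(\<lambda>p. \<Sum>i\<in>S. g (fst p) i) \<in> borel_measurable (N \<Otimes>\<^sub>M lborel)"
      by (rule borel_measurable_sum) (use measurable_compose[OF measurable_fst assms] S in auto)
    have m: "(\<lambda>p. \<bar>snd p - (\<Sum>i\<in>S. g (fst p) i)\<bar>) \<in> borel_measurable (N \<Otimes>\<^sub>M lborel)"
      using m0 by measurable
    show "{x \<in> space (N \<Otimes>\<^sub>M lborel). \<bar>snd x - (\<Sum>i\<in>S. g (fst x) i)\<bar> < e \<and> snd x \<in> {- 1..1}} \<in> sets (N \<Otimes>\<^sub>M lborel)"
      using m by measurable
  qed
  have "(\<lambda>w. emeasure lborel (Pair w -` Q)) \<in> borel_measurable N"
    by (rule lborel.measurable_emeasure_Pair[OF Q])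
  moreover have "Pair w -` Q = Aset e (g w) s \<inter> {-1..1}" if "w \<in> space N" for w
    using that by (auto simp: Q_def Aset_def space_pair_measure)
  ultimately show ?thesis by (simp cong: measurable_cong)
qed


lemma trans_emeasure:
  assumes [measurable]: "B \<in> sets borel"
  shows "emeasure lborel {y. y - s \<in> B} = emeasure lborel (B::real set)"
proof -
  have "emeasure lborel B = (\<integral>\<^sup>+u. indicator B u \<partial>lborel)"
    by simp
  also have "\<dots> = (\<integral>\<^sup>+y. indicator B (y - s) \<partial>lborel)"
    using nn_integral_real_affine[of "indicator B" 1 "-s"] by simp
  also have "\<dots> = (\<integral>\<^sup>+y. indicator {y. y - s \<in> B} y \<partial>lborel)"
    by (intro nn_integral_cong) (auto simp: indicator_def)
  also have "\<dots> = emeasure lborel {y. y - s \<in> B}"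
    by (intro nn_integral_indicator) measurable
  finally show ?thesis by simp
qed

lemma trans_emeasure':
  assumes [measurable]: "B \<in> sets borel"
  shows "(\<integral>\<^sup>+s. indicator B (y - s) \<partial>lborel) = emeasure lborel (B::real set)"
proof -
  have "emeasure lborel B = (\<integral>\<^sup>+u. indicator B u \<partial>lborel)"
    by simp
  also have "\<dots> = (\<integral>\<^sup>+s. indicator B (y + (-1) * s) \<partial>lborel)"
    using nn_integral_real_affine[of "indicator B" "-1" y] by simp
  finally show ?thesis by simp
qed

lemma K3:
  assumes [measurable]: "B \<in> sets borel"
  shows "(\<integral>\<^sup>+s. emeasure lborel ({y. y - s \<in> B} \<inter> B) \<partial>lborel) = emeasure lborel (B::real set) * emeasure lborel B"
proof -
  have "(\<integral>\<^sup>+s. emeasure lborel ({y. y - s \<in> B} \<inter> B) \<partial>lborel)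
      = (\<integral>\<^sup>+s. \<integral>\<^sup>+y. indicator B (y - s) * indicator B y \<partial>lborel \<partial>lborel)"
  proof (intro nn_integral_cong)
    fix s
    have "emeasure lborel ({y. y - s \<in> B} \<inter> B) = (\<integral>\<^sup>+y. indicator ({y. y - s \<in> B} \<inter> B) y \<partial>lborel)"
      by (intro nn_integral_indicator[symmetric]) measurable
    also have "\<dots> = (\<integral>\<^sup>+y. indicator B (y - s) * indicator B y \<partial>lborel)"
      by (intro nn_integral_cong) (auto simp: indicator_def)
    finally show "emeasure lborel ({y. y - s \<in> B} \<inter> B) = \<dots>" .
  qed
  also have "\<dots> = (\<integral>\<^sup>+y. \<integral>\<^sup>+s. indicator B (y - s) * indicator B y \<partial>lborel \<partial>lborel)"
    by (rule lborel_pair.Fubini') measurable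
  also have "\<dots> = (\<integral>\<^sup>+y. emeasure lborel B * indicator B y \<partial>lborel)"
    by (intro nn_integral_cong) (simp add: nn_integral_multc trans_emeasure')
  also have "\<dots> = emeasure lborel B * emeasure lborel B"
    by (simp add: nn_integral_cmult)
  finally show ?thesis .
qed

lemma K2:
  assumes [measurable]: "B \<in> sets borel" and BI: "B \<subseteq> {-1..1::real}"
  shows "(\<integral>\<^sup>+s. emeasure lborel ({y. y - s \<in> B} \<inter> {-1..1}) * indicator {-1..1} s \<partial>lborel)
       = (\<integral>\<^sup>+u. indicator B u * ennreal (2 - \<bar>u\<bar>) \<partial>lborel)"
proof -
  have "(\<integral>\<^sup>+s. emeasure lborel ({y. y - s \<in> B} \<inter> {-1..1}) * indicator {-1..1} s \<partial>lborel)
      = (\<integral>\<^sup>+s. \<integral>\<^sup>+y. indicator B (y - s) * indicator {-1..1} y * indicator {-1..1::real} s \<partial>lborel \<partial>lborel)"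
  proof (intro nn_integral_cong)
    fix s :: real
    have "emeasure lborel ({y. y - s \<in> B} \<inter> {-1..1}) = (\<integral>\<^sup>+y. indicator ({y. y - s \<in> B} \<inter> {-1..1}) y \<partial>lborel)"
      by (intro nn_integral_indicator[symmetric]) measurable
    also have "\<dots> = (\<integral>\<^sup>+y. indicator B (y - s) * indicator {-1..1} y \<partial>lborel)"
      by (intro nn_integral_cong) (auto simp: indicator_def)
    finally have e: "emeasure lborel ({y. y - s \<in> B} \<inter> {-1..1}) = (\<integral>\<^sup>+y. indicator B (y - s) * indicator {-1..1} y \<partial>lborel)" .
    have "(\<integral>\<^sup>+y. indicator B (y - s) * indicator {-1..1} y * indicator {-1..1::real} s \<partial>lborel)
       = (\<integral>\<^sup>+y. indicator B (y - s) * indicator {-1..1} y \<partial>lborel) * indicator {-1..1::real} s"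
      by (rule nn_integral_multc) measurable
    then show "emeasure lborel ({y. y - s \<in> B} \<inter> {-1..1}) * indicator {-1..1} s = (\<integral>\<^sup>+y. indicator B (y - s) * indicator {-1..1} y * indicator {-1..1::real} s \<partial>lborel)"
      using e by simp
  qed
  also have "\<dots> = (\<integral>\<^sup>+y. \<integral>\<^sup>+s. indicator B (y - s) * indicator {-1..1} y * indicator {-1..1::real} s \<partial>lborel \<partial>lborel)"
    by (rule lborel_pair.Fubini') measurable
  also have "\<dots> = (\<integral>\<^sup>+y. \<integral>\<^sup>+u. indicator B u * indicator {-1..1} y * indicator {-1..1::real} (y - u) \<partial>lborel \<partial>lborel)"
  proof (rule nn_integral_cong)
    fix y :: real
    show "(\<integral>\<^sup>+s. indicator B (y - s) * indicator {-1..1} y * indicator {-1..1::real} s \<partial>lborel)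
        = (\<integral>\<^sup>+u. indicator B u * indicator {-1..1} y * indicator {-1..1::real} (y - u) \<partial>lborel)"
      using nn_integral_real_affine[of "\<lambda>s. indicator B (y - s) * indicator {-1..1} y * indicator {-1..1::real} s :: ennreal" "-1" y]
      by simp
  qed
  also have "\<dots> = (\<integral>\<^sup>+u. \<integral>\<^sup>+y. indicator B u * indicator {-1..1} y * indicator {-1..1::real} (y - u) \<partial>lborel \<partial>lborel)"
    by (rule lborel_pair.Fubini') measurable
  also have "\<dots> = (\<integral>\<^sup>+u. indicator B u * ennreal (2 - \<bar>u\<bar>) \<partial>lborel)"
  proof (intro nn_integral_cong)
    fix u :: real
    show "(\<integral>\<^sup>+y. indicator B u * indicator {-1..1} y * indicator {-1..1::real} (y - u) \<partial>lborel)
        = indicator B u * ennreal (2 - \<bar>u\<bar>)"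
    proof (cases "u \<in> B")
      case False then show ?thesis by simp
    next
      case True
      then have u: "-1 \<le> u" "u \<le> 1" using BI by auto
      have "(\<integral>\<^sup>+y. indicator B u * indicator {-1..1} y * indicator {-1..1::real} (y - u) \<partial>lborel)
          = (\<integral>\<^sup>+y. indicator {max (-1) (u - 1) .. min 1 (u + 1)} y \<partial>lborel)"
        using True by (intro nn_integral_cong) (auto simp: indicator_def)
      also have "\<dots> = ennreal (min 1 (u + 1) - max (-1) (u - 1))"
        using u by simp
      also have "min 1 (u + 1) - max (-1) (u - 1) = 2 - \<bar>u\<bar>"
        using u by (auto simp: min_def max_def abs_if)
      finally show ?thesis using True by simp
    qed
  qed
  finally show ?thesis .
qed


lemma FTC_piece:
  fixes c :: real assumes "c \<le> 1"
  shows "((\<lambda>u. u - c) has_integral (1 - c)\<^sup>2 / 2) {c..1}"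
proof -
  have "((\<lambda>u. u - c) has_integral ((\<lambda>u. (u - c)\<^sup>2 / 2) 1 - (\<lambda>u. (u - c)\<^sup>2 / 2) c)) {c..1}"
    using assms
    by (intro fundamental_theorem_of_calculus)
       (auto simp: has_real_derivative_iff_has_vector_derivative[symmetric] intro!: derivative_eq_intros)
  then show ?thesis by simp
qed

lemma FTC_piece2:
  fixes c :: real assumes "c \<le> 1"
  shows "((\<lambda>u. - u - c) has_integral (1 - c)\<^sup>2 / 2) {-1..-c}"
proof -
  have "((\<lambda>u. - u - c) has_integral ((\<lambda>u. - (- u - c)\<^sup>2 / 2) (-c) - (\<lambda>u. - (- u - c)\<^sup>2 / 2) (-1))) {-1..-c}"
    using assms
    by (intro fundamental_theorem_of_calculus)
       (auto simp: has_real_derivative_iff_has_vector_derivative[symmetric] field_simps intro!: derivative_eq_intros)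
  then show ?thesis by (rule has_integral_eq_rhs) (simp add: power2_eq_square field_simps)
qed

lemma J_integral:
  fixes c :: real assumes c: "0 \<le> c" "c \<le> 1"
  shows "((\<lambda>u. max 0 (\<bar>u\<bar> - c)) has_integral (1 - c)\<^sup>2) {-1..1}"
proof -
  have a: "((\<lambda>u. max 0 (\<bar>u\<bar> - c)) has_integral (1 - c)\<^sup>2 / 2) {-1..-c}"
    using FTC_piece2[OF c(2)] by (subst has_integral_cong[where g="\<lambda>u. - u - c"]) (use c in auto)
  have b: "((\<lambda>u. max 0 (\<bar>u\<bar> - c)) has_integral 0) {-c..c}"
    using has_integral_0[of "{-c..c}"] by (subst has_integral_cong[where g="\<lambda>u. 0"]) (use c in auto)
  have d: "((\<lambda>u. max 0 (\<bar>u\<bar> - c)) has_integral (1 - c)\<^sup>2 / 2) {c..1}"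
    using FTC_piece[OF c(2)] by (subst has_integral_cong[where g="\<lambda>u. u - c"]) (use c in auto)
  have "((\<lambda>u. max 0 (\<bar>u\<bar> - c)) has_integral ((1 - c)\<^sup>2 / 2 + 0)) {-1..c}"
    by (rule has_integral_combine[OF _ _ a b]) (use c in auto)
  then have "((\<lambda>u. max 0 (\<bar>u\<bar> - c)) has_integral ((1 - c)\<^sup>2 / 2 + 0 + (1 - c)\<^sup>2 / 2)) {-1..1}"
    by (intro has_integral_combine[OF _ _ _ d]) (use c in auto)
  then show ?thesis by simp
qed

lemma J_nn:
  fixes c :: real assumes c: "0 \<le> c" "c \<le> 1"
  shows "(\<integral>\<^sup>+u. ennreal (indicator {-1..1} u * max 0 (\<bar>u\<bar> - c)) \<partial>lborel) = ennreal ((1 - c)\<^sup>2)"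
  using nn_integral_has_integral_lebesgue[OF _ J_integral[OF c]] by simp

lemma K4:
  assumes [measurable]: "B \<in> sets borel" and BI: "B \<subseteq> {-1..1::real}"
    and b0: "emeasure lborel B = ennreal b0" "0 \<le> b0" "b0 \<le> 2"
  shows "ennreal (b0 + b0\<^sup>2 / 4) \<le> (\<integral>\<^sup>+u. indicator B u * ennreal (2 - \<bar>u\<bar>) \<partial>lborel)"
proof -
  define d where "d = b0 / 2"
  define c where "c = 1 - d"
  have c: "0 \<le> c" "c \<le> 1" using b0 by (auto simp: c_def d_def)
  have pw: "ennreal ((1 + d) * indicator B u) \<le> indicator B u * ennreal (2 - \<bar>u\<bar>) + ennreal (indicator {-1..1} u * max 0 (\<bar>u\<bar> - c))" for u
  proof (cases "u \<in> B")
    case True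
    then have "u \<in> {-1..1}" using BI by blast
    then have u: "\<bar>u\<bar> \<le> 1" by (simp add: abs_le_iff)
    have "ennreal ((1 + d) * indicator B u) = ennreal (1 + d)" using True by simp
    also have "\<dots> \<le> ennreal (2 - \<bar>u\<bar> + max 0 (\<bar>u\<bar> - c))"
      by (intro ennreal_leI) (auto simp: c_def max_def)
    also have "\<dots> = ennreal (2 - \<bar>u\<bar>) + ennreal (max 0 (\<bar>u\<bar> - c))"
      using u by (intro ennreal_plus) auto
    finally show ?thesis using True BI by auto
  qed simp
  have "ennreal ((1 + d) * b0) = (\<integral>\<^sup>+u. ennreal ((1 + d) * indicator B u) \<partial>lborel)"
  proof -
    have "(\<integral>\<^sup>+u. ennreal ((1 + d) * indicator B u) \<partial>lborel) = (\<integral>\<^sup>+u. ennreal (1 + d) * indicator B u \<partial>lborel)"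
      by (intro nn_integral_cong) (auto split: split_indicator)
    also have "\<dots> = ennreal (1 + d) * ennreal b0"
      by (simp add: nn_integral_cmult_indicator b0)
    also have "\<dots> = ennreal ((1 + d) * b0)"
      using b0 by (simp add: ennreal_mult d_def)
    finally show ?thesis by simp
  qed
  also have "\<dots> \<le> (\<integral>\<^sup>+u. indicator B u * ennreal (2 - \<bar>u\<bar>) + ennreal (indicator {-1..1} u * max 0 (\<bar>u\<bar> - c)) \<partial>lborel)"
    by (intro nn_integral_mono pw)
  also have "\<dots> = (\<integral>\<^sup>+u. indicator B u * ennreal (2 - \<bar>u\<bar>) \<partial>lborel) + ennreal ((1 - c)\<^sup>2)"
    by (subst nn_integral_add) (auto simp: J_nn[OF c])
  finally have *: "ennreal ((1 + d) * b0) \<le> (\<integral>\<^sup>+u. indicator B u * ennreal (2 - \<bar>u\<bar>) \<partial>lborel) + ennreal ((1 - c)\<^sup>2)" .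
  have "ennreal (b0 + b0\<^sup>2 / 4) = ennreal ((1 + d) * b0) - ennreal ((1 - c)\<^sup>2)"
    using b0 by (subst ennreal_minus) (auto simp: c_def d_def power2_eq_square algebra_simps)
  also have "\<dots> \<le> (\<integral>\<^sup>+u. indicator B u * ennreal (2 - \<bar>u\<bar>) \<partial>lborel)"
    using * by (subst ennreal_minus_le_iff) (auto simp: add.commute)
  finally show ?thesis .
qed


lemma U_prob: "prob_space (uniform_measure lborel {-1..1::real})"
  by (intro prob_space_uniform_measure) auto

lemma U_int:
  assumes [measurable]: "f \<in> borel_measurable borel"
  shows "(\<integral>\<^sup>+s. f s \<partial>uniform_measure lborel {-1..1::real}) = ennreal (1/2) * (\<integral>\<^sup>+s. f s * indicator {-1..1} s \<partial>lborel)"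
proof -
  have "(\<integral>\<^sup>+s. f s \<partial>uniform_measure lborel {-1..1::real}) = (\<integral>\<^sup>+s. f s * indicator {-1..1} s \<partial>lborel) / emeasure lborel {-1..1::real}"
    by (rule nn_integral_uniform_measure) auto
  also have "emeasure lborel {-1..1::real} = 2" by simp
  finally show ?thesis by (simp add: Groups.mult_ac(2) divide_ennreal_def)
qed

lemma key:
  fixes B :: "real set" and \<beta> :: real
  assumes [measurable]: "B \<in> sets borel" and BI: "B \<subseteq> {-1..1}" and b: "emeasure lborel B \<le> 1"
    and \<beta>: "0 < \<beta>" "\<beta> < 1/8"
  defines "Ga \<equiv> \<lambda>s. emeasure lborel ({y. y - s \<in> B} \<inter> {-1..1})"
    and "Gb \<equiv> \<lambda>s. emeasure lborel ({y. y - s \<in> B} \<inter> B)"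
  defines "E \<equiv> {s. Gb s + ennreal \<beta> * emeasure lborel B \<le> Ga s}"
  shows "E \<in> sets borel" "1 - 7 / (8 * (1 - \<beta>)) \<le> measure (uniform_measure lborel {-1..1::real}) E"
proof -
  define U where "U = uniform_measure lborel {-1..1::real}"
  interpret U: prob_space U unfolding U_def by (rule U_prob)
  have sU[simp]: "sets U = sets borel" "space U = UNIV" by (auto simp: U_def)
  obtain b0 where b0: "emeasure lborel B = ennreal b0" "0 \<le> b0" "b0 \<le> 1"
    using b by (metis dual_order.trans emeasure_eq_ennreal_measure ennreal_le_1 ennreal_one_neq_top measure_nonneg neq_top_trans)
  have QA: "{p \<in> space (borel \<Otimes>\<^sub>M lborel). snd p - fst p \<in> B \<and> snd p \<in> {-1..1::real}} \<in> sets (borel \<Otimes>\<^sub>M lborel)"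
    by measurable
  have QB: "{p \<in> space (borel \<Otimes>\<^sub>M lborel). snd p - fst p \<in> B \<and> snd p \<in> B} \<in> sets (borel \<Otimes>\<^sub>M (lborel::real measure))"
    by measurable
  have [measurable]: "Ga \<in> borel_measurable borel"
    using lborel.measurable_emeasure_Pair[OF QA] unfolding Ga_def
    by (rule measurable_cong[THEN iffD1, rotated]) (auto simp: space_pair_measure intro!: arg_cong[where f="emeasure lborel"])
  have [measurable]: "Gb \<in> borel_measurable borel"
    using lborel.measurable_emeasure_Pair[OF QB] unfolding Gb_def
    by (rule measurable_cong[THEN iffD1, rotated]) (auto simp: space_pair_measure intro!: arg_cong[where f="emeasure lborel"])
  show E[measurable]: "E \<in> sets borel"
    unfolding E_def by measurable
  have mE[measurable]: "E \<in> sets U" using E by simp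
  have mU[measurable]: "Gb \<in> borel_measurable U"
    unfolding measurable_cong_sets[OF sU(1) refl] by simp
  have Ga_le: "Ga s \<le> ennreal b0" for s
  proof -
    have "Ga s \<le> emeasure lborel {y. y - s \<in> B}"
      unfolding Ga_def by (intro emeasure_mono) auto
    then show ?thesis using trans_emeasure[of B s] b0 by simp
  qed
  have pw: "Ga s \<le> Gb s + ennreal (\<beta> * b0) + ennreal ((1 - \<beta>) * b0) * indicator E s" for s
  proof (cases "s \<in> E")
    case True
    have "Ga s \<le> ennreal (\<beta> * b0) + ennreal ((1 - \<beta>) * b0)"
      using Ga_le[of s] b0 \<beta> mult_left_le_one_le[of b0 \<beta>] by (subst ennreal_plus[symmetric]) (auto simp: algebra_simps)
    also have "\<dots> \<le> Gb s + ennreal (\<beta> * b0) + ennreal ((1 - \<beta>) * b0)"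
      by (simp add: add.assoc)
    finally show ?thesis using True by simp
  next
    case False
    then have "Ga s \<le> Gb s + ennreal \<beta> * ennreal b0" unfolding E_def using b0 by auto
    then show ?thesis using False b0 \<beta> by (simp add: ennreal_mult)
  qed
  have "(\<integral>\<^sup>+s. Ga s \<partial>U) \<le> (\<integral>\<^sup>+s. Gb s + ennreal (\<beta> * b0) + ennreal ((1 - \<beta>) * b0) * indicator E s \<partial>U)"
    by (intro nn_integral_mono pw)
  also have "\<dots> = (\<integral>\<^sup>+s. Gb s + ennreal (\<beta> * b0) \<partial>U) + (\<integral>\<^sup>+s. ennreal ((1 - \<beta>) * b0) * indicator E s \<partial>U)"
    by (rule nn_integral_add) measurable
  also have "(\<integral>\<^sup>+s. Gb s + ennreal (\<beta> * b0) \<partial>U) = (\<integral>\<^sup>+s. Gb s \<partial>U) + (\<integral>\<^sup>+s. ennreal (\<beta> * b0) \<partial>U)"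
    by (rule nn_integral_add) measurable
  also have "(\<integral>\<^sup>+s. ennreal (\<beta> * b0) \<partial>U) = ennreal (\<beta> * b0)"
    using U.emeasure_space_1 by simp
  also have "(\<integral>\<^sup>+s. ennreal ((1 - \<beta>) * b0) * indicator E s \<partial>U) = ennreal ((1 - \<beta>) * b0) * emeasure U E"
    by (rule nn_integral_cmult_indicator) simp
  finally have I1: "(\<integral>\<^sup>+s. Ga s \<partial>U) \<le> (\<integral>\<^sup>+s. Gb s \<partial>U) + ennreal (\<beta> * b0) + ennreal ((1 - \<beta>) * b0) * emeasure U E" .
  have I2: "ennreal (1/2) * ennreal (b0 + b0\<^sup>2 / 4) \<le> (\<integral>\<^sup>+s. Ga s \<partial>U)"
  proof -
    have "(\<integral>\<^sup>+s. Ga s \<partial>U) = ennreal (1/2) * (\<integral>\<^sup>+u. indicator B u * ennreal (2 - \<bar>u\<bar>) \<partial>lborel)"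
      unfolding U_def by (simp add: U_int Ga_def K2[OF _ BI])
    moreover have "ennreal (b0 + b0\<^sup>2 / 4) \<le> (\<integral>\<^sup>+u. indicator B u * ennreal (2 - \<bar>u\<bar>) \<partial>lborel)"
      by (rule K4[OF _ BI b0(1,2)]) (use b0 in auto)
    ultimately show ?thesis by (simp add: mult_left_mono)
  qed
  have I3: "(\<integral>\<^sup>+s. Gb s \<partial>U) \<le> ennreal (1/2) * ennreal (b0 * b0)"
  proof -
    have "(\<integral>\<^sup>+s. Gb s \<partial>U) = ennreal (1/2) * (\<integral>\<^sup>+s. Gb s * indicator {-1..1} s \<partial>lborel)"
      unfolding U_def by (simp add: U_int)
    also have "\<dots> \<le> ennreal (1/2) * (\<integral>\<^sup>+s. Gb s \<partial>lborel)"
      by (intro mult_left_mono nn_integral_mono) (auto split: split_indicator)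
    also have "(\<integral>\<^sup>+s. Gb s \<partial>lborel) = ennreal (b0 * b0)"
      unfolding Gb_def using K3[of B] b0 by (simp add: ennreal_mult)
    finally show ?thesis .
  qed
  define P where "P = measure U E"
  have P: "emeasure U E = ennreal P" "0 \<le> P" "P \<le> 1"
    by (auto simp: P_def U.emeasure_eq_measure)
  have "ennreal ((b0 + b0\<^sup>2 / 4) / 2) \<le> ennreal (b0 * b0 / 2 + \<beta> * b0 + (1 - \<beta>) * b0 * P)"
  proof -
    have "ennreal ((b0 + b0\<^sup>2 / 4) / 2) = ennreal (1/2) * ennreal (b0 + b0\<^sup>2 / 4)"
      using b0 by (intro trans[OF _ ennreal_mult]) auto
    also have "\<dots> \<le> ennreal (1/2) * ennreal (b0 * b0) + ennreal (\<beta> * b0) + ennreal ((1 - \<beta>) * b0) * ennreal P"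
    proof -
      have "(\<integral>\<^sup>+s. Gb s \<partial>U) + ennreal (\<beta> * b0) + ennreal ((1 - \<beta>) * b0) * emeasure U E
          \<le> ennreal (1/2) * ennreal (b0 * b0) + ennreal (\<beta> * b0) + ennreal ((1 - \<beta>) * b0) * ennreal P"
        unfolding P(1) by (intro add_right_mono I3)
      from order_trans[OF I2 order_trans[OF I1 this]] show ?thesis .
    qed
    also have "\<dots> = ennreal (b0 * b0 / 2 + \<beta> * b0 + (1 - \<beta>) * b0 * P)"
    proof -
      have h1: "ennreal (1/2) * ennreal (b0 * b0) = ennreal (b0 * b0 / 2)"
        using ennreal_mult[of "1/2" "b0 * b0", symmetric] by simp
      have h2: "ennreal ((1 - \<beta>) * b0) * ennreal P = ennreal ((1 - \<beta>) * b0 * P)"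
        using ennreal_mult[of "(1 - \<beta>) * b0" P, symmetric] b0 \<beta> P by simp
      have n1: "0 \<le> b0 * b0 / 2" "0 \<le> \<beta> * b0" "0 \<le> (1 - \<beta>) * b0 * P" using b0 \<beta> P by auto
      show ?thesis unfolding h1 h2
        using ennreal_plus[OF n1(1) n1(2)] ennreal_plus[OF add_nonneg_nonneg[OF n1(1) n1(2)] n1(3)] by simp
    qed
    finally show ?thesis .
  qed
  note le1 = this
  have ineq: "(b0 + b0\<^sup>2 / 4) / 2 \<le> b0 * b0 / 2 + \<beta> * b0 + (1 - \<beta>) * b0 * P"
  proof -
    have nn: "0 \<le> b0 * b0 / 2 + \<beta> * b0 + (1 - \<beta>) * b0 * P"
      using b0 \<beta> P by (intro add_nonneg_nonneg mult_nonneg_nonneg) auto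
    from ennreal_le_iff[OF nn, THEN iffD1, OF le1] show ?thesis .
  qed
  show "1 - 7 / (8 * (1 - \<beta>)) \<le> measure (uniform_measure lborel {-1..1::real}) E"
  proof (cases "b0 = 0")
    case True
    have "Gb s \<le> Ga s" for s unfolding Ga_def Gb_def using BI by (intro emeasure_mono) auto
    then have "E = UNIV" unfolding E_def using True b0 by auto
    then have "P = 1" unfolding P_def using U.prob_space by simp
    then show ?thesis using \<beta> unfolding P_def U_def by (simp add: field_simps)
  next
    case False
    then have bp: "0 < b0" using b0 by simp
    have e1: "(b0 + b0\<^sup>2 / 4) / 2 = b0 * ((1 + b0 / 4) / 2)" by (simp add: power2_eq_square field_simps)
    have e2: "b0 * b0 / 2 + \<beta> * b0 + (1 - \<beta>) * b0 * P = b0 * (b0 / 2 + \<beta> + (1 - \<beta>) * P)" by (simp add: algebra_simps)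
    have "b0 * ((1 + b0 / 4) / 2) \<le> b0 * (b0 / 2 + \<beta> + (1 - \<beta>) * P)"
      using ineq unfolding e1 e2 .
    then have "(1 + b0 / 4) / 2 \<le> b0 / 2 + \<beta> + (1 - \<beta>) * P"
      by (rule mult_le_cancel_left_pos[OF bp, THEN iffD1])
    then have "1/8 - \<beta> \<le> (1 - \<beta>) * P" using b0(3) by (simp add: field_simps)
    then have "(1/8 - \<beta>) / (1 - \<beta>) \<le> P" using \<beta> by (simp add: field_simps)
    moreover have "1 - 7 / (8 * (1 - \<beta>)) = (1/8 - \<beta>) / (1 - \<beta>)" using \<beta> by (simp add: field_simps)
    ultimately show ?thesis unfolding P_def U_def by simp
  qed
qed


lemma approx_v_nonneg: "0 \<le> approx_v e x t"
  unfolding approx_v_eq by simp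

lemma approx_v_enn: "approx_v e x t = enn2real (emeasure lborel (Aset e x t \<inter> {-1..1})) / 2"
  unfolding emeasure_B_eq using approx_v_nonneg[of e x t] by simp

lemma meas_v_G:
  fixes g :: "'b \<Rightarrow> nat \<Rightarrow> real"
  assumes "\<And>i. i < s \<Longrightarrow> (\<lambda>w. g w i) \<in> borel_measurable N"
  shows "(\<lambda>w. approx_v e (g w) s) \<in> borel_measurable N"
proof -
  have "(\<lambda>w. emeasure lborel (Aset e (g w) s \<inter> {-1..1})) \<in> borel_measurable N"
    by (rule meas_G[OF assms])
  then have "(\<lambda>w. enn2real (emeasure lborel (Aset e (g w) s \<inter> {-1..1}))) \<in> borel_measurable N"
    by (rule borel_measurable_enn2real)
  then show ?thesis unfolding approx_v_enn by (rule borel_measurable_divide) simp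
qed

lemma key_step:
  fixes \<beta> e :: real and z :: "nat \<Rightarrow> real"
  assumes v: "approx_v e z t \<le> 1/2" and \<beta>: "0 < \<beta>" "\<beta> < 1/8"
  shows "\<exists>E \<in> sets borel. 1 - 7 / (8 * (1 - \<beta>)) \<le> measure (uniform_measure lborel {-1..1::real}) E
          \<and> (\<forall>y\<in>E. (1 + \<beta>) * approx_v e z t \<le> approx_v e (z(t := y)) (Suc t))"
proof -
  define A where "A = Aset e z t"
  define B where "B = A \<inter> {-1..1}"
  have [measurable]: "B \<in> sets borel" "A \<in> sets borel" unfolding B_def A_def by auto
  have BI: "B \<subseteq> {-1..1}" unfolding B_def by auto
  have bB: "emeasure lborel B = ennreal (2 * approx_v e z t)"
    unfolding B_def A_def by (rule emeasure_B_eq)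
  have b1: "emeasure lborel B \<le> 1" using bB v by simp
  define Ga where "Ga = (\<lambda>s. emeasure lborel ({y. y - s \<in> B} \<inter> {-1..1}))"
  define Gb where "Gb = (\<lambda>s. emeasure lborel ({y. y - s \<in> B} \<inter> B))"
  define E where "E = {s. Gb s + ennreal \<beta> * emeasure lborel B \<le> Ga s}"
  note K = key[OF _ BI b1 \<beta>]
  show ?thesis
  proof (intro bexI conjI ballI)
    show "E \<in> sets borel" using K(1) unfolding E_def Ga_def Gb_def by simp
    show "1 - 7 / (8 * (1 - \<beta>)) \<le> measure (uniform_measure lborel {-1..1::real}) E" using K(2) unfolding E_def Ga_def Gb_def by simp
    fix y assume "y \<in> E"
    then have yE: "Gb y + ennreal \<beta> * emeasure lborel B \<le> Ga y" unfolding E_def by simp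
    define T where "T = {w. w - y \<in> B} \<inter> {-1..1}"
    have [measurable]: "T \<in> sets borel" unfolding T_def by measurable
    have A': "Aset e (z(t := y)) (Suc t) = A \<union> {w. w - y \<in> A}"
    proof -
      have "Aset e (z(t := y)) t = A" unfolding A_def by (rule Aset_dep) auto
      then show ?thesis unfolding Aset_Suc by simp
    qed
    have sub: "B \<union> (T - B) \<subseteq> Aset e (z(t := y)) (Suc t) \<inter> {-1..1}"
      unfolding A' T_def B_def by auto
    have "Ga y = emeasure lborel (T \<inter> B) + emeasure lborel (T - B)"
      unfolding Ga_def T_def[symmetric] by (subst plus_emeasure) (auto intro!: arg_cong[where f="emeasure lborel"])
    moreover have "T \<inter> B = {w. w - y \<in> B} \<inter> B" unfolding T_def using BI by auto
    ultimately have GaGb: "Ga y = Gb y + emeasure lborel (T - B)" unfolding Gb_def by simp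
    have Gbfin: "Gb y \<noteq> \<top>"
    proof -
      have "Gb y \<le> emeasure lborel B" unfolding Gb_def by (intro emeasure_mono) auto
      then have "Gb y \<le> 1" using b1 by (rule order_trans)
      then show ?thesis by (rule neq_top_trans[rotated]) simp
    qed
    have bT: "ennreal \<beta> * emeasure lborel B \<le> emeasure lborel (T - B)"
      using yE GaGb Gbfin by (simp add: ennreal_add_left_cancel_le)
    have "ennreal ((1 + \<beta>) * (2 * approx_v e z t)) = emeasure lborel B + ennreal \<beta> * emeasure lborel B"
    proof -
      have n: "0 \<le> 2 * approx_v e z t" using approx_v_nonneg[of e z t] by simp
      have "ennreal \<beta> * emeasure lborel B = ennreal (\<beta> * (2 * approx_v e z t))"
        unfolding bB using ennreal_mult[of \<beta> "2 * approx_v e z t"] \<beta> n by simp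
      then have "emeasure lborel B + ennreal \<beta> * emeasure lborel B = ennreal (2 * approx_v e z t + \<beta> * (2 * approx_v e z t))"
        unfolding bB using ennreal_plus[of "2 * approx_v e z t" "\<beta> * (2 * approx_v e z t)"] \<beta> n by simp
      then show ?thesis by (simp add: algebra_simps)
    qed
    also have "\<dots> \<le> emeasure lborel B + emeasure lborel (T - B)"
      using bT by (rule add_left_mono)
    also have "\<dots> = emeasure lborel (B \<union> (T - B))"
      by (rule plus_emeasure) auto
    also have "\<dots> \<le> emeasure lborel (Aset e (z(t := y)) (Suc t) \<inter> {-1..1})"
      by (rule emeasure_mono[OF sub]) auto
    also have "\<dots> = ennreal (2 * approx_v e (z(t := y)) (Suc t))"
      by (rule emeasure_B_eq)
    finally have "(1 + \<beta>) * (2 * approx_v e z t) \<le> 2 * approx_v e (z(t := y)) (Suc t)"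
      using approx_v_nonneg[of e "z(t := y)" "Suc t"] by (simp add: ennreal_le_iff)
    then show "(1 + \<beta>) * approx_v e z t \<le> approx_v e (z(t := y)) (Suc t)" by simp
  qed
qed


definition Yv :: "real \<Rightarrow> real \<Rightarrow> nat \<Rightarrow> (nat \<Rightarrow> real) \<Rightarrow> real" where
  "Yv e \<beta> s z = (if 1/2 < approx_v e z s \<or> (1 + \<beta>) * approx_v e z s \<le> approx_v e z (Suc s) then 1 else 0)"

definition Ssum :: "real \<Rightarrow> real \<Rightarrow> nat \<Rightarrow> (nat \<Rightarrow> real) \<Rightarrow> real" where
  "Ssum e \<beta> n z = (\<Sum>s<n. Yv e \<beta> s z)"

lemma Yv_dep:
  assumes "\<And>i. i < Suc s \<Longrightarrow> z i = z' i"
  shows "Yv e \<beta> s z = Yv e \<beta> s z'"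
proof -
  have "approx_v e z s = approx_v e z' s" by (rule approx_v_dep) (use assms in auto)
  moreover have "approx_v e z (Suc s) = approx_v e z' (Suc s)" by (rule approx_v_dep) (use assms in auto)
  ultimately show ?thesis unfolding Yv_def by simp
qed

lemma Ssum_dep:
  assumes "\<And>i. i < n \<Longrightarrow> z i = z' i"
  shows "Ssum e \<beta> n z = Ssum e \<beta> n z'"
  unfolding Ssum_def by (intro sum.cong refl Yv_dep) (use assms in auto)

lemma Ssum_Suc: "Ssum e \<beta> (Suc n) z = Ssum e \<beta> n z + Yv e \<beta> n z"
  by (simp add: Ssum_def)

lemma Yv_01: "Yv e \<beta> s z = 0 \<or> Yv e \<beta> s z = 1"
  by (simp add: Yv_def)

lemma meas_Y_G:
  fixes g :: "'b \<Rightarrow> nat \<Rightarrow> real"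
  assumes "\<And>i. i < Suc s \<Longrightarrow> (\<lambda>w. g w i) \<in> borel_measurable N"
  shows "(\<lambda>w. Yv e \<beta> s (g w)) \<in> borel_measurable N"
proof -
  have [measurable]: "(\<lambda>w. approx_v e (g w) s) \<in> borel_measurable N"
    by (rule meas_v_G) (use assms in auto)
  have [measurable]: "(\<lambda>w. approx_v e (g w) (Suc s)) \<in> borel_measurable N"
    by (rule meas_v_G) (use assms in auto)
  show ?thesis unfolding Yv_def by measurable
qed

lemma meas_S_G:
  fixes g :: "'b \<Rightarrow> nat \<Rightarrow> real"
  assumes "\<And>i. i < n \<Longrightarrow> (\<lambda>w. g w i) \<in> borel_measurable N"
  shows "(\<lambda>w. Ssum e \<beta> n (g w)) \<in> borel_measurable N"
  unfolding Ssum_def by (intro borel_measurable_sum meas_Y_G) (use assms in auto)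

lemma sets_U: "sets (uniform_measure lborel {-1..1::real}) = sets borel"
  by simp

lemma comp_meas_PiM:
  assumes "i \<in> I"
  shows "(\<lambda>z. z i) \<in> borel_measurable (PiM I (\<lambda>_. uniform_measure lborel {-1..1::real}))"
proof -
  have "(\<lambda>z. z i) \<in> PiM I (\<lambda>_. uniform_measure lborel {-1..1::real}) \<rightarrow>\<^sub>M uniform_measure lborel {-1..1::real}"
    by (rule measurable_component_singleton[OF assms])
  then show ?thesis by (simp add: measurable_cong_sets[OF refl sets_U])
qed

lemma upd_meas:
  "(\<lambda>y. (z(t := y)) i) \<in> borel_measurable (uniform_measure lborel {-1..1::real})"
proof -
  have "(\<lambda>y. (z(t := y)) i) \<in> borel_measurable borel" by (cases "i = t") auto
  then show ?thesis by (simp add: measurable_cong_sets[OF sets_U refl])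
qed

lemma p_bounds:
  fixes \<beta> :: real assumes "0 < \<beta>" "\<beta> < 1/8"
  shows "0 < 1 - 7 / (8 * (1 - \<beta>))" "1 - 7 / (8 * (1 - \<beta>)) \<le> 1"
  using assms by (auto simp: field_simps)

lemma step_int:
  fixes \<beta> e l :: real and z :: "nat \<Rightarrow> real"
  assumes \<beta>: "0 < \<beta>" "\<beta> < 1/8" and l: "0 \<le> l"
  defines "p \<equiv> 1 - 7 / (8 * (1 - \<beta>))"
  shows "(\<integral>\<^sup>+y. ennreal (exp (- l * Yv e \<beta> t (z(t := y)))) \<partial>uniform_measure lborel {-1..1::real})
         \<le> ennreal (1 - p + p * exp (- l))"
proof -
  define U where "U = uniform_measure lborel {-1..1::real}"
  interpret U: prob_space U unfolding U_def by (rule U_prob)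
  have sU: "sets U = sets borel" "space U = UNIV" by (auto simp: U_def)
  have p: "0 < p" "p \<le> 1" unfolding p_def using p_bounds[OF \<beta>] by auto
  have el: "0 < exp (- l)" "exp (- l) \<le> 1" using l by auto
  have vt: "approx_v e (z(t := y)) t = approx_v e z t" for y
    by (rule approx_v_dep) auto
  show ?thesis
  proof (cases "1/2 < approx_v e z t")
    case True
    then have "Yv e \<beta> t (z(t := y)) = 1" for y unfolding Yv_def vt by simp
    then have "(\<integral>\<^sup>+y. ennreal (exp (- l * Yv e \<beta> t (z(t := y)))) \<partial>U) = (\<integral>\<^sup>+y. ennreal (exp (- l)) \<partial>U)"
      by simp
    also have "\<dots> = ennreal (exp (- l))"
      using U.emeasure_space_1 by simp
    also have "\<dots> \<le> ennreal (1 - p + p * exp (- l))"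
    proof (intro ennreal_leI)
      have "0 \<le> (1 - p) * (1 - exp (- l))" using p el by auto
      then show "exp (- l) \<le> 1 - p + p * exp (- l)" by (simp add: algebra_simps)
    qed
    finally show ?thesis unfolding U_def .
  next
    case False
    then have "approx_v e z t \<le> 1/2" by simp
    from key_step[OF this \<beta>] obtain E where E: "E \<in> sets borel"
      "p \<le> measure U E" "\<And>y. y \<in> E \<Longrightarrow> (1 + \<beta>) * approx_v e z t \<le> approx_v e (z(t := y)) (Suc t)"
      unfolding p_def U_def by blast
    have EU: "E \<in> sets U" using E(1) sU by simp
    have pw: "ennreal (exp (- l * Yv e \<beta> t (z(t := y)))) \<le> ennreal (exp (- l)) * indicator E y + indicator (UNIV - E) y" for y
    proof (cases "y \<in> E")
      case True
      then have "Yv e \<beta> t (z(t := y)) = 1" using E(3)[OF True] unfolding Yv_def vt by simp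
      then show ?thesis using True by simp
    next
      case False
      have "exp (- l * Yv e \<beta> t (z(t := y))) \<le> 1"
        using Yv_01[of e \<beta> t "z(t := y)"] l by auto
      then show ?thesis using False by simp
    qed
    define P where "P = measure U E"
    have P: "p \<le> P" "P \<le> 1" using E(2) by (auto simp: P_def)
    have "(\<integral>\<^sup>+y. ennreal (exp (- l * Yv e \<beta> t (z(t := y)))) \<partial>U)
        \<le> (\<integral>\<^sup>+y. ennreal (exp (- l)) * indicator E y + indicator (UNIV - E) y \<partial>U)"
      by (intro nn_integral_mono pw)
    also have "\<dots> = (\<integral>\<^sup>+y. ennreal (exp (- l)) * indicator E y \<partial>U) + (\<integral>\<^sup>+y. indicator (UNIV - E) y \<partial>U)"
      by (rule nn_integral_add) (use EU sU in auto)
    also have "\<dots> = ennreal (exp (- l)) * emeasure U E + emeasure U (UNIV - E)"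
      using EU sU by (simp add: nn_integral_cmult_indicator)
    also have "emeasure U E = ennreal P" by (simp add: P_def U.emeasure_eq_measure)
    also have "emeasure U (UNIV - E) = ennreal (1 - P)"
      using U.prob_compl[OF EU] sU by (simp add: P_def U.emeasure_eq_measure)
    also have "ennreal (exp (- l)) * ennreal P + ennreal (1 - P) = ennreal (exp (- l) * P + (1 - P))"
      using el P p by (simp add: ennreal_mult ennreal_plus)
    also have "\<dots> \<le> ennreal (1 - p + p * exp (- l))"
    proof (intro ennreal_leI)
      have "p * (1 - exp (- l)) \<le> P * (1 - exp (- l))" using P el by (intro mult_right_mono) auto
      then show "exp (- l) * P + (1 - P) \<le> 1 - p + p * exp (- l)" by (simp add: algebra_simps)
    qed
    finally show ?thesis unfolding U_def .
  qed
qed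


lemma product_U: "product_prob_space (\<lambda>_::nat. uniform_measure lborel {-1..1::real})"
  by (auto simp: product_prob_space_def product_prob_space_axioms_def product_sigma_finite_def
      U_prob prob_space_imp_sigma_finite)

lemma IND:
  fixes \<beta> e l :: real
  assumes \<beta>: "0 < \<beta>" "\<beta> < 1/8" and l: "0 \<le> l"
  defines "p \<equiv> 1 - 7 / (8 * (1 - \<beta>))"
  shows "(\<integral>\<^sup>+z. ennreal (exp (- l * Ssum e \<beta> n z)) \<partial>PiM {..<n} (\<lambda>_. uniform_measure lborel {-1..1::real}))
         \<le> ennreal ((1 - p + p * exp (- l)) ^ n)"
proof (induction n)
  case 0
  have "prob_space (PiM {..<0::nat} (\<lambda>_. uniform_measure lborel {-1..1::real}))"
    by (rule prob_space_PiM) (rule U_prob)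
  then show ?case by (simp add: Ssum_def prob_space.emeasure_space_1)
next
  case (Suc n)
  define U where "U = uniform_measure lborel {-1..1::real}"
  define q where "q = 1 - p + p * exp (- l)"
  have p: "0 < p" "p \<le> 1" unfolding p_def using p_bounds[OF \<beta>] by auto
  have q: "0 \<le> q" unfolding q_def using p by (smt (verit) exp_gt_zero mult_nonneg_nonneg)
  interpret PP: product_prob_space "\<lambda>_::nat. U" UNIV unfolding U_def by (rule product_U)
  have mS[measurable]: "(\<lambda>z. Ssum e \<beta> m z) \<in> borel_measurable (PiM J (\<lambda>_. U))" if "{..<m} \<subseteq> J" for m J
    by (rule meas_S_G[where g="\<lambda>z. z"]) (use that in \<open>auto simp: U_def intro!: comp_meas_PiM\<close>)
  have mf: "(\<lambda>z. ennreal (exp (- l * Ssum e \<beta> (Suc n) z))) \<in> borel_measurable (PiM (insert n {..<n}) (\<lambda>_. U))"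
    using mS[of "Suc n" "insert n {..<n}"] by (auto simp: lessThan_Suc)
  have "(\<integral>\<^sup>+z. ennreal (exp (- l * Ssum e \<beta> (Suc n) z)) \<partial>PiM {..<Suc n} (\<lambda>_. U))
      = (\<integral>\<^sup>+z. ennreal (exp (- l * Ssum e \<beta> (Suc n) z)) \<partial>PiM (insert n {..<n}) (\<lambda>_. U))"
    by (simp add: lessThan_Suc)
  also have "\<dots> = (\<integral>\<^sup>+x. \<integral>\<^sup>+y. ennreal (exp (- l * Ssum e \<beta> (Suc n) (x(n := y)))) \<partial>U \<partial>PiM {..<n} (\<lambda>_. U))"
    by (rule PP.product_nn_integral_insert[OF _ _ mf]) auto
  also have "\<dots> \<le> (\<integral>\<^sup>+x. ennreal (exp (- l * Ssum e \<beta> n x)) * ennreal q \<partial>PiM {..<n} (\<lambda>_. U))"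
  proof (rule nn_integral_mono)
    fix x :: "nat \<Rightarrow> real"
    have eq: "ennreal (exp (- l * Ssum e \<beta> (Suc n) (x(n := y))))
        = ennreal (exp (- l * Ssum e \<beta> n x)) * ennreal (exp (- l * Yv e \<beta> n (x(n := y))))" for y
    proof -
      have "Ssum e \<beta> n (x(n := y)) = Ssum e \<beta> n x" by (rule Ssum_dep) auto
      then have e2: "- l * Ssum e \<beta> (Suc n) (x(n := y)) = - l * Ssum e \<beta> n x + - l * Yv e \<beta> n (x(n := y))"
        by (simp add: Ssum_Suc algebra_simps)
      have h: "exp (- l * Ssum e \<beta> (Suc n) (x(n := y))) = exp (- l * Ssum e \<beta> n x) * exp (- l * Yv e \<beta> n (x(n := y)))"
        unfolding e2 by (rule exp_add)
      show ?thesis unfolding h by (rule ennreal_mult) auto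
    qed
    have mY: "(\<lambda>y. ennreal (exp (- l * Yv e \<beta> n (x(n := y))))) \<in> borel_measurable U"
    proof -
      have "(\<lambda>y. Yv e \<beta> n (x(n := y))) \<in> borel_measurable U"
        by (rule meas_Y_G[where g="\<lambda>y. x(n := y)"]) (simp add: U_def upd_meas)
      then show ?thesis by measurable
    qed
    have "(\<integral>\<^sup>+y. ennreal (exp (- l * Ssum e \<beta> (Suc n) (x(n := y)))) \<partial>U)
        = ennreal (exp (- l * Ssum e \<beta> n x)) * (\<integral>\<^sup>+y. ennreal (exp (- l * Yv e \<beta> n (x(n := y)))) \<partial>U)"
      unfolding eq by (rule nn_integral_cmult[OF mY])
    also have "\<dots> \<le> ennreal (exp (- l * Ssum e \<beta> n x)) * ennreal q"
      by (intro mult_left_mono) (use step_int[OF \<beta> l, of e n x] in \<open>simp_all add: U_def q_def p_def\<close>)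
    finally show "(\<integral>\<^sup>+y. ennreal (exp (- l * Ssum e \<beta> (Suc n) (x(n := y)))) \<partial>U)
        \<le> ennreal (exp (- l * Ssum e \<beta> n x)) * ennreal q" .
  qed
  also have "\<dots> = (\<integral>\<^sup>+x. ennreal (exp (- l * Ssum e \<beta> n x)) \<partial>PiM {..<n} (\<lambda>_. U)) * ennreal q"
    by (rule nn_integral_multc) (use mS[of n "{..<n}"] in measurable)
  also have "\<dots> \<le> ennreal (q ^ n) * ennreal q"
    by (rule mult_right_mono) (use Suc.IH in \<open>simp_all add: U_def q_def\<close>)
  also have "\<dots> = ennreal (q ^ Suc n)"
    using q by (simp add: ennreal_mult[symmetric] mult.commute)
  finally show ?case unfolding U_def q_def .
qed

lemma tau1_le: "tau1 e x \<le> ereal (real n) \<longleftrightarrow> (\<exists>s\<le>n. 1/2 < approx_v e x s)"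
proof
  assume "tau1 e x \<le> ereal (real n)"
  then have ex: "\<exists>t. 1/2 < approx_v e x t" and le: "(LEAST t. 1/2 < approx_v e x t) \<le> n"
    unfolding tau1_def by (auto split: if_splits)
  show "\<exists>s\<le>n. 1/2 < approx_v e x s"
    using LeastI_ex[OF ex] le by blast
next
  assume "\<exists>s\<le>n. 1/2 < approx_v e x s"
  then obtain s where s: "s \<le> n" "1/2 < approx_v e x s" by blast
  then have "(LEAST t. 1/2 < approx_v e x t) \<le> s" by (intro Least_le)
  then show "tau1 e x \<le> ereal (real n)" using s unfolding tau1_def by auto
qed

lemma DET:
  fixes e \<beta> :: real
  assumes e: "0 < e" "e \<le> 1/2" and \<beta>: "0 < \<beta>"
    and v: "\<And>s. s \<le> n \<Longrightarrow> approx_v e z s \<le> 1/2"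
  shows "Ssum e \<beta> n z \<le> ln (1 / (2 * e)) / ln (1 + \<beta>)"
proof -
  have claim: "m \<le> n \<Longrightarrow> e * (1 + \<beta>) powr Ssum e \<beta> m z \<le> approx_v e z m" for m
  proof (induction m)
    case 0
    then show ?case using e approx_v_0[of e z] by (simp add: Ssum_def)
  next
    case (Suc m)
    then have IH: "e * (1 + \<beta>) powr Ssum e \<beta> m z \<le> approx_v e z m" by simp
    have vm: "approx_v e z m \<le> 1/2" using Suc.prems v by simp
    show ?case
    proof (cases "(1 + \<beta>) * approx_v e z m \<le> approx_v e z (Suc m)")
      case True
      then have Y: "Yv e \<beta> m z = 1" by (simp add: Yv_def)
      have "e * (1 + \<beta>) powr Ssum e \<beta> (Suc m) z = (e * (1 + \<beta>) powr Ssum e \<beta> m z) * (1 + \<beta>)"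
        using \<beta> by (simp add: Ssum_Suc Y powr_add)
      also have "\<dots> \<le> approx_v e z m * (1 + \<beta>)"
        using IH \<beta> by (intro mult_right_mono) auto
      also have "\<dots> \<le> approx_v e z (Suc m)" using True by (simp add: mult.commute)
      finally show ?thesis .
    next
      case False
      then have Y: "Yv e \<beta> m z = 0" using vm by (simp add: Yv_def)
      have "e * (1 + \<beta>) powr Ssum e \<beta> (Suc m) z = e * (1 + \<beta>) powr Ssum e \<beta> m z"
        by (simp add: Ssum_Suc Y)
      also have "\<dots> \<le> approx_v e z m" by (rule IH)
      also have "\<dots> \<le> approx_v e z (Suc m)" by (rule approx_v_mono)
      finally show ?thesis .
    qed
  qed
  have "e * (1 + \<beta>) powr Ssum e \<beta> n z \<le> 1/2"
    using claim[of n] v[of n] by simp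
  then have "(1 + \<beta>) powr Ssum e \<beta> n z \<le> 1 / (2 * e)"
    using e by (simp add: field_simps)
  then have "ln ((1 + \<beta>) powr Ssum e \<beta> n z) \<le> ln (1 / (2 * e))"
    using e \<beta> by (subst ln_le_cancel_iff) auto
  then have "Ssum e \<beta> n z * ln (1 + \<beta>) \<le> ln (1 / (2 * e))"
    using \<beta> by simp
  moreover have "0 < ln (1 + \<beta>)" using \<beta> by simp
  ultimately show ?thesis by (simp add: pos_le_divide_eq)
qed

lemma hoeff_q:
  fixes p l :: real assumes "0 \<le> l" "p \<le> 1"
  shows "1 - p + p * exp (- l) \<le> exp (l\<^sup>2 / 8 - l * p)"
proof -
  have "- l * (1 - p) + ln (1 + (1 - p) * (exp l - 1)) \<le> l\<^sup>2 / 8"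
    using Hoeffdings_lemma_aux[of l "1 - p"] assms by simp
  then have h: "ln (1 + (1 - p) * (exp l - 1)) \<le> l\<^sup>2 / 8 + l * (1 - p)" by (simp add: algebra_simps)
  have pos: "0 < 1 + (1 - p) * (exp l - 1)"
    using assms by (smt (verit) mult_nonneg_nonneg one_le_exp_iff)
  have "1 + (1 - p) * (exp l - 1) = exp (ln (1 + (1 - p) * (exp l - 1)))" using pos by simp
  also have "\<dots> \<le> exp (l\<^sup>2 / 8 + l * (1 - p))" using h by simp
  finally have h2: "1 + (1 - p) * (exp l - 1) \<le> exp (l\<^sup>2 / 8 + l * (1 - p))" .
  have "1 - p + p * exp (- l) = exp (- l) * (1 + (1 - p) * (exp l - 1))"
    by (simp add: algebra_simps exp_minus_inverse)
  also have "\<dots> \<le> exp (- l) * exp (l\<^sup>2 / 8 + l * (1 - p))"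
    using h2 by (intro mult_left_mono) auto
  also have "\<dots> = exp (l\<^sup>2 / 8 - l * p)" by (simp add: exp_add[symmetric] algebra_simps)
  finally show ?thesis .
qed


lemma v0_big:
  assumes "1/2 < e" shows "1/2 < approx_v e x 0"
proof (cases "e \<le> 1")
  case True then show ?thesis using assms approx_v_0[of e x] by simp
next
  case False
  then have "Aset e x 0 \<inter> {-1..1} = {-1..1}" by (auto simp: Aset_0)
  then show ?thesis unfolding approx_v_eq by simp
qed

lemma final_arith:
  fixes p I n :: real
  assumes p: "0 < p" and n: "0 < n" and nI: "I / p \<le> n"
  defines "l \<equiv> 4 * (n * p - I) / n"
  shows "0 \<le> l" "l * I + n * (l\<^sup>2 / 8 - l * p) = - (2 * p\<^sup>2 / n) * (n - I / p)\<^sup>2"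
proof -
  have "I \<le> n * p" using nI p by (simp add: field_simps)
  then show "0 \<le> l" unfolding l_def using n by simp
  have a: "(2 * p\<^sup>2 / n) * (n - I / p)\<^sup>2 = 2 * (n * p - I)\<^sup>2 / n"
  proof -
    have "p * (n - I / p) = n * p - I" using p by (simp add: field_simps)
    then have "p\<^sup>2 * (n - I / p)\<^sup>2 = (n * p - I)\<^sup>2" by (metis power_mult_distrib)
    note h = this
    have "2 * p\<^sup>2 / n * (n - I / p)\<^sup>2 = 2 * (p\<^sup>2 * (n - I / p)\<^sup>2) / n" by simp
    also have "\<dots> = 2 * (n * p - I)\<^sup>2 / n" unfolding h ..
    finally show ?thesis .
  qed
  have b: "l * I + n * (l\<^sup>2 / 8 - l * p) = - 2 * (n * p - I)\<^sup>2 / n"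
    unfolding l_def using n by (simp add: field_simps power2_eq_square)
  show "l * I + n * (l\<^sup>2 / 8 - l * p) = - (2 * p\<^sup>2 / n) * (n - I / p)\<^sup>2"
    unfolding b mult_minus_left a by simp
qed



theorem lemma4:
  fixes M :: "'a measure" and X :: "nat \<Rightarrow> 'a \<Rightarrow> real"
    and \<epsilon> \<beta> :: real and t :: int
  assumes "prob_space M"
    and "\<And>i. X i \<in> borel_measurable M"
    and "prob_space.indep_vars M (\<lambda>_. borel) X UNIV"
    and "\<And>i. distr M lborel (X i) = uniform_measure lborel {-1..1::real}"
    and "\<epsilon> > 0"
    and "0 < \<beta>" and "\<beta> < 1/8"
    and "real_of_int t \<ge>
           real_of_int \<lceil>ln (1 / (2 * \<epsilon>)) / ln (1 + \<beta>)\<rceil> / (1 - 7 / (8 * (1 - \<beta>)))"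
  shows "measure M {\<omega> \<in> space M. tau1 \<epsilon> (\<lambda>i. X i \<omega>) \<le> ereal (real_of_int t)}
         \<ge> 1 - exp (- (2 * (1 - 7 / (8 * (1 - \<beta>)))\<^sup>2 / real_of_int t) *
                 (real_of_int t - real_of_int \<lceil>ln (1 / (2 * \<epsilon>)) / ln (1 + \<beta>)\<rceil>
                                   / (1 - 7 / (8 * (1 - \<beta>))))\<^sup>2)"
proof -
  interpret M: prob_space M by (rule assms(1))
  define p where "p = 1 - 7 / (8 * (1 - \<beta>))"
  define I where "I = real_of_int \<lceil>ln (1 / (2 * \<epsilon>)) / ln (1 + \<beta>)\<rceil>"
  have p: "0 < p" "p \<le> 1" unfolding p_def using p_bounds[OF assms(6,7)] by auto
  have tI: "I / p \<le> real_of_int t" using assms(8) unfolding p_def I_def .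
  have main: "1 - exp (- (2 * p\<^sup>2 / real_of_int t) * (real_of_int t - I / p)\<^sup>2)
      \<le> measure M {\<omega> \<in> space M. tau1 \<epsilon> (\<lambda>i. X i \<omega>) \<le> ereal (real_of_int t)}"
  proof (cases "t \<le> 0")
    case True
    have "2 * p\<^sup>2 / real_of_int t \<le> 0" using True by (intro divide_nonneg_nonpos) auto
    then have "0 \<le> - (2 * p\<^sup>2 / real_of_int t) * (real_of_int t - I / p)\<^sup>2"
      by (intro mult_nonneg_nonneg) auto
    then have "1 \<le> exp (- (2 * p\<^sup>2 / real_of_int t) * (real_of_int t - I / p)\<^sup>2)" by simp
    moreover have "0 \<le> measure M {\<omega> \<in> space M. tau1 \<epsilon> (\<lambda>i. X i \<omega>) \<le> ereal (real_of_int t)}"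
      by (rule measure_nonneg)
    ultimately show ?thesis by linarith
  next
    case False
    define n where "n = nat t"
    have n: "t = int n" "1 \<le> n" using False by (auto simp: n_def)
    have tn: "real_of_int t = real n" using n by simp
    show ?thesis
    proof (cases "1/2 < \<epsilon>")
      case True
      have "{\<omega> \<in> space M. tau1 \<epsilon> (\<lambda>i. X i \<omega>) \<le> ereal (real_of_int t)} = space M"
        unfolding tn tau1_le using v0_big[OF True] by auto
      then have "measure M {\<omega> \<in> space M. tau1 \<epsilon> (\<lambda>i. X i \<omega>) \<le> ereal (real_of_int t)} = 1"
        by (simp add: M.prob_space)
      moreover have "0 < exp (- (2 * p\<^sup>2 / real_of_int t) * (real_of_int t - I / p)\<^sup>2)" by simp
      ultimately show ?thesis by linarith
    next
      case False
      then have e2: "\<epsilon> \<le> 1/2" by simp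
      define U where "U = uniform_measure lborel {-1..1::real}"
      define PU where "PU = PiM {..<n} (\<lambda>_. U)"
      define Nb where "Nb = PiM {..<n} (\<lambda>_. borel :: real measure)"
      define Z where "Z = (\<lambda>\<omega>. \<lambda>i\<in>{..<n}. X i \<omega>)"
      have Zm: "Z \<in> measurable M Nb" unfolding Z_def Nb_def
        by (rule measurable_restrict) (use assms(2) in auto)
      have distr: "distr M Nb Z = PU"
      proof -
        have ind: "M.indep_vars (\<lambda>_. borel) X {..<n}" using M.indep_vars_subset[OF assms(3)] by auto
        have "0 \<in> {..<n}" using n(2) by simp
        then have ne: "{..<n} \<noteq> {}" by blast
        have "distr M Nb Z = (\<Pi>\<^sub>M i\<in>{..<n}. distr M borel (X i))"
          unfolding Nb_def Z_def using M.indep_vars_iff_distr_eq_PiM[where M'="\<lambda>_. borel" and X=X, OF ne] ind assms(2) by auto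
        also have "\<dots> = PU" unfolding PU_def U_def
        proof (rule PiM_cong)
          fix i show "distr M borel (X i) = uniform_measure lborel {-1..1::real}"
            using assms(4)[of i] distr_cong[of M M borel lborel "X i" "X i"] by simp
        qed simp
        finally show ?thesis .
      qed
      have sPU: "sets PU = sets Nb" using distr by (metis sets_distr)
      have spPU: "space PU = space Nb" using sets_eq_imp_space_eq[OF sPU] .
      interpret PU: prob_space PU unfolding PU_def U_def by (rule prob_space_PiM) (rule U_prob)
      have mv: "(\<lambda>z. approx_v \<epsilon> z s) \<in> borel_measurable PU" if "s \<le> n" for s
        unfolding PU_def U_def by (rule meas_v_G[where g="\<lambda>z. z"]) (use that in \<open>auto intro!: comp_meas_PiM\<close>)
      define Good where "Good = {z \<in> space PU. \<exists>s\<in>{..n}. 1/2 < approx_v \<epsilon> z s}"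
      have Good_eq: "Good = (\<Union>s\<in>{..n}. {z \<in> space PU. 1/2 < approx_v \<epsilon> z s})"
        by (auto simp: Good_def)
      have Good_sets: "Good \<in> sets PU" unfolding Good_eq
      proof (rule sets.finite_UN)
        fix s assume "s \<in> {..n}"
        then have [measurable]: "(\<lambda>z. approx_v \<epsilon> z s) \<in> borel_measurable PU" using mv by auto
        show "{z \<in> space PU. 1/2 < approx_v \<epsilon> z s} \<in> sets PU" by measurable
      qed simp
      have mS[measurable]: "(\<lambda>z. Ssum \<epsilon> \<beta> n z) \<in> borel_measurable PU"
        unfolding PU_def U_def by (rule meas_S_G[where g="\<lambda>z. z"]) (auto intro!: comp_meas_PiM)
      define Bad where "Bad = {z \<in> space PU. Ssum \<epsilon> \<beta> n z \<le> I}"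
      have Bad_sets[measurable]: "Bad \<in> sets PU" unfolding Bad_def by measurable
      have G_eq: "{\<omega> \<in> space M. tau1 \<epsilon> (\<lambda>i. X i \<omega>) \<le> ereal (real_of_int t)} = Z -` Good \<inter> space M"
      proof (intro set_eqI)
        fix \<omega>
        show "\<omega> \<in> {\<omega> \<in> space M. tau1 \<epsilon> (\<lambda>i. X i \<omega>) \<le> ereal (real_of_int t)} \<longleftrightarrow> \<omega> \<in> Z -` Good \<inter> space M"
        proof (cases "\<omega> \<in> space M")
          case True
          have Zs: "Z \<omega> \<in> space PU" using measurable_space[OF Zm True] spPU by simp
          have vv: "approx_v \<epsilon> (Z \<omega>) s = approx_v \<epsilon> (\<lambda>i. X i \<omega>) s" if "s \<le> n" for s
            by (rule approx_v_dep) (use that in \<open>auto simp: Z_def\<close>)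
          show ?thesis using True Zs vv unfolding tn tau1_le Good_def by auto
        qed simp
      qed
      have mG: "measure M {\<omega> \<in> space M. tau1 \<epsilon> (\<lambda>i. X i \<omega>) \<le> ereal (real_of_int t)} = measure PU Good"
      proof -
        have "measure (distr M Nb Z) Good = measure M (Z -` Good \<inter> space M)"
          by (rule measure_distr[OF Zm]) (use Good_sets sPU in simp)
        then show ?thesis unfolding G_eq distr by simp
      qed
      have mG2: "measure PU Good = 1 - measure PU (space PU - Good)"
        using PU.prob_compl[OF Good_sets] by simp
      have sub: "space PU - Good \<subseteq> Bad"
      proof
        fix z assume z: "z \<in> space PU - Good"
        then have "\<forall>s\<in>{..n}. \<not> 1/2 < approx_v \<epsilon> z s" unfolding Good_def by blast
        then have "\<And>s. s \<le> n \<Longrightarrow> approx_v \<epsilon> z s \<le> 1/2" by (meson atMost_iff not_less)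
        then have "Ssum \<epsilon> \<beta> n z \<le> ln (1 / (2 * \<epsilon>)) / ln (1 + \<beta>)"
          by (rule DET[OF assms(5) e2 assms(6)])
        also have "\<dots> \<le> I" unfolding I_def by (rule le_of_int_ceiling)
        finally show "z \<in> Bad" using z unfolding Bad_def by auto
      qed
      have mB: "measure PU (space PU - Good) \<le> measure PU Bad"
        by (rule PU.finite_measure_mono[OF sub Bad_sets])
      define l where "l = 4 * (real n * p - I) / real n"
      have nn: "0 < real n" using n by simp
      note FA = final_arith[OF p(1) nn tI[unfolded tn], folded l_def]
      define q where "q = 1 - p + p * exp (- l)"
      have q: "0 \<le> q" unfolding q_def using p by (smt (verit) exp_gt_zero mult_nonneg_nonneg)
      have "emeasure PU Bad \<le> ennreal (exp (l * I) * q ^ n)"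
      proof -
        have "emeasure PU Bad = (\<integral>\<^sup>+z. indicator Bad z \<partial>PU)"
          by (rule nn_integral_indicator[symmetric, OF Bad_sets])
        also have "\<dots> \<le> (\<integral>\<^sup>+z. ennreal (exp (l * I)) * ennreal (exp (- l * Ssum \<epsilon> \<beta> n z)) \<partial>PU)"
        proof (rule nn_integral_mono)
          fix z
          show "indicator Bad z \<le> ennreal (exp (l * I)) * ennreal (exp (- l * Ssum \<epsilon> \<beta> n z))"
          proof (cases "z \<in> Bad")
            case True
            then have "Ssum \<epsilon> \<beta> n z \<le> I" unfolding Bad_def by auto
            then have "0 \<le> l * I + - l * Ssum \<epsilon> \<beta> n z" using FA(1)
              by (metis add.commute diff_ge_0_iff_ge mult_left_mono mult_minus_left uminus_add_conv_diff)
            then have "1 \<le> exp (l * I) * exp (- l * Ssum \<epsilon> \<beta> n z)" by (simp add: exp_add[symmetric])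
            then show ?thesis using True by (simp add: ennreal_mult[symmetric])
          qed simp
        qed
        also have "\<dots> = ennreal (exp (l * I)) * (\<integral>\<^sup>+z. ennreal (exp (- l * Ssum \<epsilon> \<beta> n z)) \<partial>PU)"
          by (rule nn_integral_cmult) measurable
        also have "\<dots> \<le> ennreal (exp (l * I)) * ennreal (q ^ n)"
          by (intro mult_left_mono) (use IND[OF assms(6,7) FA(1), where e=\<epsilon> and n=n] in \<open>simp_all add: PU_def U_def q_def p_def\<close>)
        also have "\<dots> = ennreal (exp (l * I) * q ^ n)"
          using q by (simp add: ennreal_mult[symmetric])
        finally show ?thesis .
      qed
      then have mB2: "measure PU Bad \<le> exp (l * I) * q ^ n"
        using q by (simp add: PU.emeasure_eq_measure ennreal_le_iff)
      have "q ^ n \<le> exp (l\<^sup>2 / 8 - l * p) ^ n"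
        using q hoeff_q[OF FA(1) p(2)] unfolding q_def by (intro power_mono) auto
      also have "\<dots> = exp (real n * (l\<^sup>2 / 8 - l * p))" by (simp add: exp_of_nat_mult)
      finally have "exp (l * I) * q ^ n \<le> exp (l * I) * exp (real n * (l\<^sup>2 / 8 - l * p))"
        by (intro mult_left_mono) auto
      also have "\<dots> = exp (l * I + real n * (l\<^sup>2 / 8 - l * p))" by (simp add: exp_add)
      also have "\<dots> = exp (- (2 * p\<^sup>2 / real n) * (real n - I / p)\<^sup>2)" using FA(2) by simp
      finally have "measure PU Bad \<le> exp (- (2 * p\<^sup>2 / real n) * (real n - I / p)\<^sup>2)" using mB2 by linarith
      then have fin: "measure PU Bad \<le> exp (- (2 * p\<^sup>2 / real_of_int t) * (real_of_int t - I / p)\<^sup>2)"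
        unfolding tn .
      show ?thesis using fin mB mG mG2 by linarith
    qed
  qed
  then show ?thesis unfolding p_def I_def .
qed


end
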